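(* Let $m\ge1$, let $Dic_m=\langle x,y\mid x^{2m},\,y^2x^m,\,y^{-1}xyx\rangle$ and $G=\mathbb{Z}/2m\mathbb{Z}\times\mathbb{Z}/2\mathbb{Z}=\langle x,y\mid x^{2m},y^2,[x,y]\rangle$. Let \[ P=\sum_{k=0}^{2m-1}\alpha_kx^k+\sum_{k=0}^{2m-1}\beta_k\,yx^k, \] regarded (with the same coefficients and words) both as an element of $\mathbb{C}[Dic_m]$ and of $\mathbb{C}G$, where the coefficients $\alpha_k$ are real and $P$ is reciprocal in both $\mathbb{C}[Dic_m]$ and $\mathbb{C}G$. Let $k=\sum_k(|\alpha_k|+|\beta_k|)$ and $|\lambda|<1/k$. Then \[ m_{G}(P,\lambda)=m_{Dic_m}(P,\lambda). \]
   Context: For a group $\Gamma$ and $Q=\sum_{g\in\Gamma}c_g g\in\mathbb{C}\Gamma$ (finite sum), the reciprocal is $Q^*=\sum_g\overline{c_g}\,g^{-1}$, and $Q$ is reciprocal if $Q=Q^*$. For reciprocal $P\in\mathbb{C}\Gamma$ with $l_1$-norm $k=\sum_g|c_g|$ and $|\lambda|<1/k$, define $m_\Gamma(P,\lambda)=-\sum_{n\ge1}a_n\lambda^n/n$, where $a_n$ is the coefficient of the identity element of $\Gamma$ in $P^n$. *)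

theory Defs
  imports Complex_Main
begin

definition gconv :: "'g set \<Rightarrow> ('g \<Rightarrow> 'g \<Rightarrow> 'g) \<Rightarrow> ('g \<Rightarrow> complex) \<Rightarrow> ('g \<Rightarrow> complex) \<Rightarrow> 'g \<Rightarrow> complex" where
  "gconv S mul f g z = (\<Sum>u\<in>S. \<Sum>v\<in>S. if mul u v = z then f u * g v else 0)"

fun gpow :: "'g set \<Rightarrow> ('g \<Rightarrow> 'g \<Rightarrow> 'g) \<Rightarrow> 'g \<Rightarrow> ('g \<Rightarrow> complex) \<Rightarrow> nat \<Rightarrow> 'g \<Rightarrow> complex" where
  "gpow S mul e f 0 = (\<lambda>z. if z = e then 1 else 0)"
| "gpow S mul e f (Suc n) = gconv S mul f (gpow S mul e f n)"

definition reciprocal :: "'g set \<Rightarrow> ('g \<Rightarrow> 'g) \<Rightarrow> ('g \<Rightarrow> complex) \<Rightarrow> bool" where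
  "reciprocal S ginv f \<longleftrightarrow> (\<forall>g\<in>S. f g = cnj (f (ginv g)))"

definition mGamma :: "'g set \<Rightarrow> ('g \<Rightarrow> 'g \<Rightarrow> 'g) \<Rightarrow> 'g \<Rightarrow> ('g \<Rightarrow> complex) \<Rightarrow> complex \<Rightarrow> complex" where
  "mGamma S mul e f lam = - (\<Sum>n. if n = 0 then 0 else gpow S mul e f n e * lam ^ n / of_nat n)"

text \<open>Both groups have carrier {(a,i). a in {0,1}, 0 <= i < 2m}; the pair (a,i)
  stands for the normal form y^a x^i.\<close>
definition dcarrier :: "nat \<Rightarrow> (int \<times> int) set" where
  "dcarrier m = {0,1} \<times> {0..<2 * int m}"

text \<open>Dic_m: x^{2m}=1, y^2 = x^m, y^{-1} x y = x^{-1} (so x^i y = y x^{-i}).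
  (y^a x^i)(y^b x^j) = y^{a+b} x^{(-1)^b i + j}, and y^2 = x^m.\<close>
definition dic_mul :: "nat \<Rightarrow> int \<times> int \<Rightarrow> int \<times> int \<Rightarrow> int \<times> int" where
  "dic_mul m p q = (case p of (a, i) \<Rightarrow> case q of (b, j) \<Rightarrow>
     ((a + b) mod 2,
      ((if b = 0 then i else - i) + j + (if a = 1 \<and> b = 1 then int m else 0)) mod (2 * int m)))"

definition dic_inv :: "nat \<Rightarrow> int \<times> int \<Rightarrow> int \<times> int" where
  "dic_inv m p = (case p of (a, i) \<Rightarrow>
     if a = 0 then (0, (- i) mod (2 * int m)) else (1, (i - int m) mod (2 * int m)))"

definition ab_mul :: "nat \<Rightarrow> int \<times> int \<Rightarrow> int \<times> int \<Rightarrow> int \<times> int" where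
  "ab_mul m p q = (case p of (a, i) \<Rightarrow> case q of (b, j) \<Rightarrow>
     ((a + b) mod 2, (i + j) mod (2 * int m)))"

definition ab_inv :: "nat \<Rightarrow> int \<times> int \<Rightarrow> int \<times> int" where
  "ab_inv m p = (case p of (a, i) \<Rightarrow> (a, (- i) mod (2 * int m)))"

definition Pelem :: "(nat \<Rightarrow> real) \<Rightarrow> (nat \<Rightarrow> complex) \<Rightarrow> int \<times> int \<Rightarrow> complex" where
  "Pelem \<alpha> \<beta> p = (case p of (a, i) \<Rightarrow>
     if a = 0 then complex_of_real (\<alpha> (nat i)) else if a = 1 then \<beta> (nat i) else 0)"

end

theory Submission
  imports Defs
begin

lemma beta_sym:
  fixes m :: nat
  assumes m: "m \<ge> 1"
    and rd: "reciprocal (dcarrier m) (dic_inv m) (Pelem \<alpha> \<beta>)"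
    and ra: "reciprocal (dcarrier m) (ab_inv m) (Pelem \<alpha> \<beta>)"
    and i: "0 \<le> i" "i < 2 * int m"
  shows "\<beta> (nat ((int m - i) mod (2 * int m))) = \<beta> (nat i)"
    and "\<alpha> (nat ((- i) mod (2 * int m))) = \<alpha> (nat i)"
proof -
  define i' where "i' = (int m - i) mod (2 * int m)"
  have M: "2 * int m > 0" using m by simp
  have i'r: "0 \<le> i'" "i' < 2 * int m" unfolding i'_def using M by auto
  have "(1, i') \<in> dcarrier m" using i'r by (simp add: dcarrier_def)
  then have "Pelem \<alpha> \<beta> (1, i') = cnj (Pelem \<alpha> \<beta> (dic_inv m (1, i')))"
    using rd unfolding reciprocal_def by blast
  then have h1: "\<beta> (nat i') = cnj (\<beta> (nat ((i' - int m) mod (2 * int m))))"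
    by (simp add: dic_inv_def Pelem_def)
  have e: "(i' - int m) mod (2 * int m) = (- i) mod (2 * int m)"
    unfolding i'_def mod_diff_left_eq by simp
  have "(1, i) \<in> dcarrier m" using i by (simp add: dcarrier_def)
  then have "Pelem \<alpha> \<beta> (1, i) = cnj (Pelem \<alpha> \<beta> (ab_inv m (1, i)))"
    using ra unfolding reciprocal_def by blast
  then have h2: "\<beta> (nat i) = cnj (\<beta> (nat ((- i) mod (2 * int m))))"
    by (simp add: ab_inv_def Pelem_def)
  show "\<beta> (nat ((int m - i) mod (2 * int m))) = \<beta> (nat i)"
  proof -
    have "\<beta> (nat i') = \<beta> (nat i)" using h1 h2 e by simp
    then show ?thesis unfolding i'_def .
  qed
  have "(0, i) \<in> dcarrier m" using i by (simp add: dcarrier_def)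
  then have "Pelem \<alpha> \<beta> (0, i) = cnj (Pelem \<alpha> \<beta> (ab_inv m (0, i)))"
    using ra unfolding reciprocal_def by blast
  then have "complex_of_real (\<alpha> (nat i)) = cnj (complex_of_real (\<alpha> (nat ((- i) mod (2 * int m)))))"
    by (simp add: ab_inv_def Pelem_def)
  then show "\<alpha> (nat ((- i) mod (2 * int m))) = \<alpha> (nat i)" by simp
qed

lemma t1: fixes M i :: int assumes "0 \<le> i" "i < M" shows "(- ((- i) mod M)) mod M = i"
  using assms by (simp add: mod_minus_eq)
lemma t2: fixes M i k :: int assumes "0 \<le> i" "i < M" shows "(k - ((k - i) mod M)) mod M = i"
  using assms by (simp add: mod_diff_right_eq)

lemma inner_eq:
  fixes m :: nat
  assumes m: "m \<ge> 1"
    and rd: "reciprocal (dcarrier m) (dic_inv m) (Pelem \<alpha> \<beta>)"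
    and ra: "reciprocal (dcarrier m) (ab_inv m) (Pelem \<alpha> \<beta>)"
    and v: "v \<in> dcarrier m"
  shows "(\<Sum>u\<in>dcarrier m. if dic_mul m u v = z then Pelem \<alpha> \<beta> u * c else 0)
       = (\<Sum>u\<in>dcarrier m. if ab_mul m u v = z then Pelem \<alpha> \<beta> u * c else 0)"
proof -
  have M: "2 * int m > 0" using m by simp
  obtain b j where vb: "v = (b, j)" by (cases v)
  have b: "b = 0 \<or> b = 1" using v vb by (simp add: dcarrier_def)
  show ?thesis
  proof (cases "b = 0")
    case True
    show ?thesis
      by (rule sum.cong) (auto simp: vb True dic_mul_def ab_mul_def dcarrier_def)
  next
    case False
    then have b1: "b = 1" using b by simp
    define \<tau> where "\<tau> = (\<lambda>(a::int, i::int). if a = 0 then (0::int, (- i) mod (2 * int m))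
                        else (1, (int m - i) mod (2 * int m)))"
    have tau: "\<tau> (\<tau> u) = u \<and> \<tau> u \<in> dcarrier m" if "u \<in> dcarrier m" for u
    proof -
      obtain a i where ua: "u = (a, i)" by (cases u)
      have ai: "a = 0 \<or> a = 1" "0 \<le> i" "i < 2 * int m" using that ua by (auto simp: dcarrier_def)
      have r1: "0 \<le> (- i) mod (2 * int m) \<and> (- i) mod (2 * int m) < 2 * int m" using M by simp
      have r2: "0 \<le> (int m - i) mod (2 * int m) \<and> (int m - i) mod (2 * int m) < 2 * int m" using M by simp
      show ?thesis
      proof (cases "a = 0")
        case True
        then show ?thesis using t1[OF ai(2,3)] r1 by (simp add: ua \<tau>_def dcarrier_def)
      next
        case False
        then have "a = 1" using ai by simp
        then show ?thesis using t2[OF ai(2,3)] r2 by (simp add: ua \<tau>_def dcarrier_def)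
      qed
    qed
    show ?thesis
    proof (rule sum.reindex_bij_witness[where i = \<tau> and j = \<tau>], goal_cases)
      case (1 u)
      then show ?case using tau by blast
    next
      case (2 u)
      then show ?case using tau by blast
    next
      case (3 u)
      then show ?case using tau by blast
    next
      case (4 u)
      then show ?case using tau by blast
    next
      case (5 u0)
      define u where "u = \<tau> u0"
      have uS: "u \<in> dcarrier m" and tu: "\<tau> u = u0" using tau[OF 5] unfolding u_def by auto
      obtain a i where ua: "u = (a, i)" by (cases u)
      have ai: "a = 0 \<or> a = 1" "0 \<le> i" "i < 2 * int m" using uS ua by (auto simp: dcarrier_def)
      have main: "dic_mul m (\<tau> u) v = ab_mul m u v \<and> Pelem \<alpha> \<beta> (\<tau> u) = Pelem \<alpha> \<beta> u"
      proof (cases "a = 0")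
        case True
        have "dic_mul m (\<tau> u) v = ab_mul m u v"
          by (simp add: ua True \<tau>_def vb b1 dic_mul_def ab_mul_def mod_add_left_eq mod_diff_right_eq add.commute)
        moreover have "Pelem \<alpha> \<beta> (\<tau> u) = Pelem \<alpha> \<beta> u"
          using beta_sym(2)[OF m rd ra ai(2,3)]
          by (simp add: ua True \<tau>_def Pelem_def)
        ultimately show ?thesis by simp
      next
        case False
        then have a1: "a = 1" using ai by simp
        have "dic_mul m (\<tau> u) v = ab_mul m u v"
          apply (simp add: ua a1 \<tau>_def vb b1 dic_mul_def ab_mul_def)
          by (simp add: mod_simps algebra_simps)
        moreover have "Pelem \<alpha> \<beta> (\<tau> u) = Pelem \<alpha> \<beta> u"
          using beta_sym(1)[OF m rd ra ai(2,3)]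
          by (simp add: ua a1 \<tau>_def Pelem_def)
        ultimately show ?thesis by simp
      qed
      show ?case using main tu unfolding u_def by simp
    qed
  qed
qed

lemma conv_eq:
  fixes m :: nat
  assumes m: "m \<ge> 1"
    and rd: "reciprocal (dcarrier m) (dic_inv m) (Pelem \<alpha> \<beta>)"
    and ra: "reciprocal (dcarrier m) (ab_inv m) (Pelem \<alpha> \<beta>)"
  shows "gconv (dcarrier m) (dic_mul m) (Pelem \<alpha> \<beta>) Q z = gconv (dcarrier m) (ab_mul m) (Pelem \<alpha> \<beta>) Q z"
proof -
  have "gconv (dcarrier m) (dic_mul m) (Pelem \<alpha> \<beta>) Q z
     = (\<Sum>v\<in>dcarrier m. \<Sum>u\<in>dcarrier m. if dic_mul m u v = z then Pelem \<alpha> \<beta> u * Q v else 0)"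
    unfolding gconv_def by (rule sum.swap)
  also have "\<dots> = (\<Sum>v\<in>dcarrier m. \<Sum>u\<in>dcarrier m. if ab_mul m u v = z then Pelem \<alpha> \<beta> u * Q v else 0)"
    by (rule sum.cong[OF refl], rule inner_eq[OF m rd ra])
  also have "\<dots> = gconv (dcarrier m) (ab_mul m) (Pelem \<alpha> \<beta>) Q z"
    unfolding gconv_def by (rule sum.swap[symmetric])
  finally show ?thesis .
qed

theorem theorem8p1:
  fixes m :: nat and \<alpha> :: "nat \<Rightarrow> real" and \<beta> :: "nat \<Rightarrow> complex" and lam :: complex
  assumes "m \<ge> 1"
    and "reciprocal (dcarrier m) (dic_inv m) (Pelem \<alpha> \<beta>)"
    and "reciprocal (dcarrier m) (ab_inv m) (Pelem \<alpha> \<beta>)"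
    and "norm lam * (\<Sum>k<2 * m. \<bar>\<alpha> k\<bar> + norm (\<beta> k)) < 1"
  shows "mGamma (dcarrier m) (ab_mul m) (0, 0) (Pelem \<alpha> \<beta>) lam
       = mGamma (dcarrier m) (dic_mul m) (0, 0) (Pelem \<alpha> \<beta>) lam"
proof -
  have eq: "gpow (dcarrier m) (ab_mul m) (0,0) (Pelem \<alpha> \<beta>) n = gpow (dcarrier m) (dic_mul m) (0,0) (Pelem \<alpha> \<beta>) n" for n
  proof (induction n)
    case 0
    then show ?case by simp
  next
    case (Suc n)
    show ?case by (simp only: gpow.simps Suc.IH) (simp add: fun_eq_iff conv_eq[OF assms(1-3)])
  qed
  show ?thesis unfolding mGamma_def by (simp only: eq)
qed

end
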